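(* In the setting of the context, assume $\Pi^\rho_\nu\ne\emptyset$ for all $\nu\ge0$. Then the following are equivalent: (a) $\rho_1>0$; (b) $\mathcal{E}_\rho\ne\emptyset$. Moreover, if $\rho_1>0$, then $\mathcal{E}_\rho=\{(k\rho_1,k):k\ge0\}$.
   Context: Let $(\Omega,\mathcal{F},\mathbb{P})$ be a probability space and a market: riskless asset $S^0_0=1$, $S^0_1=1+r$, $r>-1$; risky assets $S^1,\dots,S^d$ with constants $S^i_0>0$ and real-valued $\mathcal{F}$-measurable $S^i_1$; returns $R^i:=(S^i_1-S^i_0)/S^i_0$. Standing assumptions: nonredundancy (if $\theta\in\mathbb{R}^{1+d}$ with $\sum_{i=0}^d\theta^iS^i_t=0$ a.s. for $t\in\{0,1\}$ then $\theta=0$), $R^i\in L^1$, $\mathbb{E}[R^i]\ne r$ for some $i$. Excess return of $\pi\in\mathbb{R}^d$: $X_\pi:=\pi\cdot(R-r\mathbf{1})$; $\Pi_\nu:=\{\pi:\mathbb{E}[X_\pi]=\nu\}$. $L$ is a Riesz space with $L^\infty\subset L\subset L^1$ containing all $X_\pi$; $\rho:L\to(-\infty,\infty]$ is monotone, cash-invariant and positively homogeneous. $\rho_\nu:=\inf\{\rho(X_\pi):\pi\in\Pi_\nu\}$; $\Pi^\rho_\nu$ is the set of $\pi\in\Pi_\nu$ with $\rho(X_\pi)<\infty$ and $\rho(X_\pi)\le\rho(X_{\pi'})$ for all $\pi'\in\Pi_\nu$. $\pi$ is strictly $\rho$-preferred over $\pi'$ if $\mathbb{E}[X_\pi]\ge\mathbb{E}[X_{\pi'}]$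 and $\rho(X_\pi)\le\rho(X_{\pi'})$ with one inequality strict; $\pi$ is $\rho$-efficient if $\mathbb{E}[X_\pi]\ge0$ and no portfolio is strictly $\rho$-preferred over it. The $\rho$-efficient frontier is $\mathcal{E}_\rho:=\{(\rho(X_\pi),\mathbb{E}[X_\pi]):\pi \text{ is } \rho\text{-efficient}\}$. *)

theory Defs
  imports "HOL-Probability.Probability"
begin

text \<open>Market: risky assets indexed by the finite type 'n (d = CARD('n)).
  S0 :: real^'n are the initial prices S^i_0, S1 \<omega> $ i the terminal prices S^i_1(\<omega>),
  r the riskless rate.\<close>

definition ret :: "real^'n \<Rightarrow> ('a \<Rightarrow> real^'n) \<Rightarrow> 'n \<Rightarrow> 'a \<Rightarrow> real" where
  "ret S0 S1 i = (\<lambda>\<omega>. (S1 \<omega> $ i - S0 $ i) / S0 $ i)"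

definition excess :: "real^'n \<Rightarrow> ('a \<Rightarrow> real^'n) \<Rightarrow> real \<Rightarrow> real^'n \<Rightarrow> 'a \<Rightarrow> real" where
  "excess S0 S1 r \<pi> = (\<lambda>\<omega>. \<Sum>i\<in>UNIV. \<pi> $ i * (ret S0 S1 i \<omega> - r))"

definition nonredundant :: "'a measure \<Rightarrow> real^'n \<Rightarrow> ('a \<Rightarrow> real^'n) \<Rightarrow> real \<Rightarrow> bool" where
  "nonredundant M S0 S1 r \<longleftrightarrow>
     (\<forall>(\<theta>0::real) (\<theta>::real^'n).
        (\<theta>0 * 1 + (\<Sum>i\<in>UNIV. \<theta> $ i * S0 $ i) = 0) \<and>
        (AE \<omega> in M. \<theta>0 * (1 + r) + (\<Sum>i\<in>UNIV. \<theta> $ i * S1 \<omega> $ i) = 0)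
        \<longrightarrow> \<theta>0 = 0 \<and> \<theta> = 0)"

definition riesz_space_between :: "'a measure \<Rightarrow> ('a \<Rightarrow> real) set \<Rightarrow> bool" where
  "riesz_space_between M L \<longleftrightarrow>
     (\<forall>X\<in>L. \<forall>Y\<in>L. (\<lambda>\<omega>. X \<omega> + Y \<omega>) \<in> L) \<and>
     (\<forall>X\<in>L. \<forall>c::real. (\<lambda>\<omega>. c * X \<omega>) \<in> L) \<and>
     (\<forall>X\<in>L. \<forall>Y\<in>L. (\<lambda>\<omega>. max (X \<omega>) (Y \<omega>)) \<in> L) \<and>
     (\<forall>X. X \<in> borel_measurable M \<and> (\<exists>B. AE \<omega> in M. \<bar>X \<omega>\<bar> \<le> B) \<longrightarrow> X \<in> L) \<and>
     (\<forall>X\<in>L. integrable M X)"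

definition risk_measure :: "'a measure \<Rightarrow> ('a \<Rightarrow> real) set \<Rightarrow> (('a \<Rightarrow> real) \<Rightarrow> ereal) \<Rightarrow> bool" where
  "risk_measure M L \<rho> \<longleftrightarrow>
     (\<forall>X\<in>L. \<rho> X \<noteq> -\<infinity>) \<and>
     (\<forall>X\<in>L. \<forall>Y\<in>L. (AE \<omega> in M. Y \<omega> \<le> X \<omega>) \<longrightarrow> \<rho> X \<le> \<rho> Y) \<and>
     (\<forall>X\<in>L. \<forall>c::real. \<rho> (\<lambda>\<omega>. X \<omega> + c) = \<rho> X - ereal c) \<and>
     (\<forall>X\<in>L. \<forall>l::real. l > 0 \<longrightarrow> \<rho> (\<lambda>\<omega>. l * X \<omega>) = ereal l * \<rho> X)"

definition Pi_nu :: "'a measure \<Rightarrow> real^'n \<Rightarrow> ('a \<Rightarrow> real^'n) \<Rightarrow> real \<Rightarrow> real \<Rightarrow> (real^'n) set" where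
  "Pi_nu M S0 S1 r \<nu> = {\<pi>. (\<integral>\<omega>. excess S0 S1 r \<pi> \<omega> \<partial>M) = \<nu>}"

definition rho_nu :: "'a measure \<Rightarrow> real^'n \<Rightarrow> ('a \<Rightarrow> real^'n) \<Rightarrow> real \<Rightarrow> (('a \<Rightarrow> real) \<Rightarrow> ereal) \<Rightarrow> real \<Rightarrow> ereal" where
  "rho_nu M S0 S1 r \<rho> \<nu> = (INF \<pi>\<in>Pi_nu M S0 S1 r \<nu>. \<rho> (excess S0 S1 r \<pi>))"

definition Pi_rho_nu :: "'a measure \<Rightarrow> real^'n \<Rightarrow> ('a \<Rightarrow> real^'n) \<Rightarrow> real \<Rightarrow> (('a \<Rightarrow> real) \<Rightarrow> ereal) \<Rightarrow> real \<Rightarrow> (real^'n) set" where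
  "Pi_rho_nu M S0 S1 r \<rho> \<nu> =
     {\<pi> \<in> Pi_nu M S0 S1 r \<nu>. \<rho> (excess S0 S1 r \<pi>) < \<infinity> \<and>
        (\<forall>\<pi>'\<in>Pi_nu M S0 S1 r \<nu>. \<rho> (excess S0 S1 r \<pi>) \<le> \<rho> (excess S0 S1 r \<pi>'))}"

definition strictly_preferred :: "'a measure \<Rightarrow> real^'n \<Rightarrow> ('a \<Rightarrow> real^'n) \<Rightarrow> real \<Rightarrow> (('a \<Rightarrow> real) \<Rightarrow> ereal) \<Rightarrow> real^'n \<Rightarrow> real^'n \<Rightarrow> bool" where
  "strictly_preferred M S0 S1 r \<rho> \<pi> \<pi>' \<longleftrightarrow>
     (let E = (\<lambda>p. \<integral>\<omega>. excess S0 S1 r p \<omega> \<partial>M); R = (\<lambda>p. \<rho> (excess S0 S1 r p)) in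
      E \<pi> \<ge> E \<pi>' \<and> R \<pi> \<le> R \<pi>' \<and> (E \<pi> > E \<pi>' \<or> R \<pi> < R \<pi>'))"

definition efficient :: "'a measure \<Rightarrow> real^'n \<Rightarrow> ('a \<Rightarrow> real^'n) \<Rightarrow> real \<Rightarrow> (('a \<Rightarrow> real) \<Rightarrow> ereal) \<Rightarrow> real^'n \<Rightarrow> bool" where
  "efficient M S0 S1 r \<rho> \<pi> \<longleftrightarrow>
     (\<integral>\<omega>. excess S0 S1 r \<pi> \<omega> \<partial>M) \<ge> 0 \<and>
     \<not> (\<exists>\<pi>'. strictly_preferred M S0 S1 r \<rho> \<pi>' \<pi>)"

definition efficient_frontier :: "'a measure \<Rightarrow> real^'n \<Rightarrow> ('a \<Rightarrow> real^'n) \<Rightarrow> real \<Rightarrow> (('a \<Rightarrow> real) \<Rightarrow> ereal) \<Rightarrow> (ereal \<times> real) set" where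
  "efficient_frontier M S0 S1 r \<rho> =
     {(\<rho> (excess S0 S1 r \<pi>), \<integral>\<omega>. excess S0 S1 r \<pi> \<omega> \<partial>M) | \<pi>. efficient M S0 S1 r \<rho> \<pi>}"

end

theory Submission
  imports Defs
begin

lemma abstract_frontier:
  fixes E :: "'v::real_vector \<Rightarrow> real" and R :: "'v \<Rightarrow> ereal"
  assumes hE: "\<And>c p. E (c *\<^sub>R p) = c * E p"
    and hR: "\<And>c p. c > 0 \<Longrightarrow> R (c *\<^sub>R p) = ereal c * R p"
    and hfin: "\<And>p. R p \<noteq> -\<infinity>"
    and hmin: "\<And>\<nu>. \<nu> \<ge> 0 \<Longrightarrow> \<exists>p. E p = \<nu> \<and> R p < \<infinity> \<and> (\<forall>q. E q = \<nu> \<longrightarrow> R p \<le> R q)"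
    and rho1_def: "rho1 = (INF q\<in>{q. E q = 1}. R q)"
    and eff_def: "\<And>p. eff p \<longleftrightarrow> E p \<ge> 0 \<and> \<not> (\<exists>q. E q \<ge> E p \<and> R q \<le> R p \<and> (E q > E p \<or> R q < R p))"
  shows "(rho1 > 0 \<longleftrightarrow> {(R p, E p) | p. eff p} \<noteq> {}) \<and>
         (rho1 > 0 \<longrightarrow> {(R p, E p) | p. eff p} = {(ereal k * rho1, k) | k. k \<ge> 0})"
proof -
  obtain p1 where p1: "E p1 = 1" "R p1 < \<infinity>" "\<forall>q. E q = 1 \<longrightarrow> R p1 \<le> R q"
    using hmin[of 1] by auto
  obtain a where a: "R p1 = ereal a" using p1(2) hfin[of p1] by (cases "R p1") auto
  have rho1: "rho1 = ereal a"
    unfolding rho1_def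
    by (rule antisym, rule INF_lower2[of p1], use p1 a in auto, intro INF_greatest, use p1 a in auto)
  obtain p0 where p0: "E p0 = 0" "R p0 < \<infinity>" "\<forall>q. E q = 0 \<longrightarrow> R p0 \<le> R q"
    using hmin[of 0] by auto
  obtain m where m: "R p0 = ereal m" using p0(2) hfin[of p0] by (cases "R p0") auto
  have "R p0 \<le> R (2 *\<^sub>R p0)" using p0 hE by auto
  then have "m \<ge> 0" using hR[of 2 p0] m by auto
  moreover have "R p0 \<le> R ((1/2) *\<^sub>R p0)" using p0 hE by auto
  then have "m \<le> 0" using hR[of "1/2" p0] m by auto
  ultimately have m0: "R p0 = 0" using m by auto
  have low: "R q \<ge> ereal (E q * a)" if "E q \<ge> 0" for q
  proof (cases "E q = 0")
    case True
    then show ?thesis using p0 m0 by (auto simp: zero_ereal_def)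
  next
    case False
    define \<nu> where "\<nu> = E q"
    have pos: "\<nu> > 0" using that False \<nu>_def by auto
    define q' where "q' = (1/\<nu>) *\<^sub>R q"
    have "E q' = 1" using hE pos \<nu>_def q'_def by auto
    then have "ereal a \<le> R q'" using p1 a by metis
    have "q = \<nu> *\<^sub>R q'" using pos q'_def by auto
    then have "R q = ereal \<nu> * R q'" using hR pos by metis
    also have "\<dots> \<ge> ereal \<nu> * ereal a"
      using \<open>ereal a \<le> R q'\<close> pos by (intro ereal_mult_left_mono) auto
    finally show ?thesis using \<nu>_def by auto
  qed
  have attain: "\<exists>p. E p = \<nu> \<and> R p = ereal (\<nu> * a)" if "\<nu> \<ge> 0" for \<nu>
  proof (cases "\<nu> = 0")
    case True then show ?thesis using p0 m0 by (intro exI[of _ p0]) (auto simp: zero_ereal_def)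
  next
    case False
    then have "\<nu> > 0" using that by auto
    then show ?thesis using hE[of \<nu> p1] hR[of \<nu> p1] p1 a by (intro exI[of _ "\<nu> *\<^sub>R p1"]) auto
  qed
  show ?thesis
  proof (cases "a > 0")
    case True
    have effc: "eff p \<longleftrightarrow> E p \<ge> 0 \<and> R p = ereal (E p * a)" for p
    proof
      assume e: "eff p"
      then have ge: "E p \<ge> 0" using eff_def by auto
      obtain w where w: "E w = E p" "R w = ereal (E p * a)" using attain[OF ge] by auto
      have "R w \<le> R p" using low[OF ge] w by auto
      moreover have "\<not> R w < R p" using e w unfolding eff_def by (metis order_refl \<open>R w \<le> R p\<close>)
      ultimately show "E p \<ge> 0 \<and> R p = ereal (E p * a)" using ge w by auto
    next
      assume h: "E p \<ge> 0 \<and> R p = ereal (E p * a)"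
      show "eff p" unfolding eff_def
      proof (intro conjI notI)
        show "E p \<ge> 0" using h by auto
      next
        assume "\<exists>q. E q \<ge> E p \<and> R q \<le> R p \<and> (E q > E p \<or> R q < R p)"
        then obtain q where q: "E q \<ge> E p" "R q \<le> R p" "E q > E p \<or> R q < R p" by auto
        have "R q \<ge> ereal (E q * a)" using low q h by auto
        moreover have "E q * a \<ge> E p * a" using q True by (simp add: mult_right_mono)
        ultimately have r1: "ereal (E q * a) \<le> ereal (E p * a)" using q h by (metis order_trans)
        then have "E q * a \<le> E p * a" by simp
        then have "E q \<le> E p" using True by simp
        moreover have "R q = R p" using r1 q h \<open>R q \<ge> ereal (E q * a)\<close>
          \<open>E q * a \<ge> E p * a\<close> by (metis antisym ereal_less_eq(3) order_trans)
        ultimately show False using q by auto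
      qed
    qed
    have eq: "{(R p, E p) | p. eff p} = {(ereal k * rho1, k) | k. k \<ge> 0}"
    proof (intro set_eqI iffI)
      fix x assume "x \<in> {(R p, E p) | p. eff p}"
      then obtain p where "x = (R p, E p)" "eff p" by auto
      then show "x \<in> {(ereal k * rho1, k) | k. k \<ge> 0}" using effc rho1 by auto
    next
      fix x assume "x \<in> {(ereal k * rho1, k) | k. k \<ge> 0}"
      then obtain k where k: "x = (ereal k * rho1, k)" "k \<ge> 0" by auto
      obtain p where pp: "E p = k" "R p = ereal (k * a)" using attain[OF k(2)] by auto
      then have "eff p" using effc k by auto
      moreover have "x = (R p, E p)" using pp k rho1 by auto
      ultimately show "x \<in> {(R p, E p) | p. eff p}" by blast
    qed
    have "(ereal 0 * rho1, 0) \<in> {(ereal k * rho1, k) | k. k \<ge> 0}" by auto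
    then show ?thesis using eq True rho1 by auto
  next
    case False
    have "\<not> eff p" for p
    proof
      assume e: "eff p"
      then have ge: "E p \<ge> 0" using eff_def by auto
      define q where "q = (E p + 1) *\<^sub>R p1"
      have Eq: "E q = E p + 1" using hE p1 q_def by auto
      have "R q = ereal ((E p + 1) * a)" using hR[of "E p + 1" p1] a ge q_def by auto
      moreover have "(E p + 1) * a \<le> E p * a" using False by (simp add: algebra_simps)
      ultimately have "R q \<le> R p" using low[OF ge] by (metis ereal_less_eq(3) order_trans)
      then show False using e Eq unfolding eff_def by auto
    qed
    then show ?thesis using False rho1 by auto
  qed
qed

theorem proposition3p15:
  fixes M :: "'a measure" and S0 :: "real^'n" and S1 :: "'a \<Rightarrow> real^'n" and r :: real
    and L :: "('a \<Rightarrow> real) set" and \<rho> :: "('a \<Rightarrow> real) \<Rightarrow> ereal"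
  assumes "prob_space M"
    and "r > -1"
    and "\<forall>i. S0 $ i > 0"
    and "\<forall>i. (\<lambda>\<omega>. S1 \<omega> $ i) \<in> borel_measurable M"
    and "nonredundant M S0 S1 r"
    and "\<forall>i. integrable M (ret S0 S1 i)"
    and "\<exists>i. (\<integral>\<omega>. ret S0 S1 i \<omega> \<partial>M) \<noteq> r"
    and "riesz_space_between M L"
    and "\<forall>\<pi>. excess S0 S1 r \<pi> \<in> L"
    and "risk_measure M L \<rho>"
    and "\<forall>\<nu>\<ge>0. Pi_rho_nu M S0 S1 r \<rho> \<nu> \<noteq> {}"
  shows "(rho_nu M S0 S1 r \<rho> 1 > 0 \<longleftrightarrow> efficient_frontier M S0 S1 r \<rho> \<noteq> {}) \<and>
         (rho_nu M S0 S1 r \<rho> 1 > 0 \<longrightarrow>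
            efficient_frontier M S0 S1 r \<rho> = {(ereal k * rho_nu M S0 S1 r \<rho> 1, k) | k. k \<ge> 0})"
proof -
  have rm: "risk_measure M L \<rho>" by fact
  have exL: "\<forall>\<pi>. excess S0 S1 r \<pi> \<in> L" by fact
  have exs: "excess S0 S1 r (c *\<^sub>R p) = (\<lambda>\<omega>. c * excess S0 S1 r p \<omega>)" for c p
    unfolding excess_def by (auto simp: sum_distrib_left algebra_simps)
  define E where "E = (\<lambda>p. \<integral>\<omega>. excess S0 S1 r p \<omega> \<partial>M)"
  define R where "R = (\<lambda>p. \<rho> (excess S0 S1 r p))"
  define eff where "eff = efficient M S0 S1 r \<rho>"
  have fr: "efficient_frontier M S0 S1 r \<rho> = {(R p, E p) | p. eff p}"
    unfolding efficient_frontier_def R_def E_def eff_def by simp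
  have hE: "\<And>c p. E (c *\<^sub>R p) = c * E p" unfolding E_def exs by simp
  have hR: "\<And>c p. c > 0 \<Longrightarrow> R (c *\<^sub>R p) = ereal c * R p"
    unfolding R_def exs using rm exL unfolding risk_measure_def by blast
  have hfin: "\<And>p. R p \<noteq> -\<infinity>" unfolding R_def using rm exL unfolding risk_measure_def by blast
  have hmin: "\<And>\<nu>. \<nu> \<ge> 0 \<Longrightarrow> \<exists>p. E p = \<nu> \<and> R p < \<infinity> \<and> (\<forall>q. E q = \<nu> \<longrightarrow> R p \<le> R q)"
  proof -
    fix \<nu> :: real assume "\<nu> \<ge> 0"
    then obtain p where "p \<in> Pi_rho_nu M S0 S1 r \<rho> \<nu>" using assms(11) by blast
    then show "\<exists>p. E p = \<nu> \<and> R p < \<infinity> \<and> (\<forall>q. E q = \<nu> \<longrightarrow> R p \<le> R q)"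
      unfolding Pi_rho_nu_def Pi_nu_def E_def R_def by auto
  qed
  have rho1_def: "rho_nu M S0 S1 r \<rho> 1 = (INF q\<in>{q. E q = 1}. R q)"
    unfolding rho_nu_def Pi_nu_def E_def R_def by simp
  have eff_char: "\<And>p. eff p \<longleftrightarrow> E p \<ge> 0 \<and> \<not> (\<exists>q. E q \<ge> E p \<and> R q \<le> R p \<and> (E q > E p \<or> R q < R p))"
    unfolding eff_def efficient_def strictly_preferred_def Let_def E_def R_def by simp
  show ?thesis unfolding fr
    by (rule abstract_frontier[OF hE hR hfin hmin rho1_def eff_char])
qed

end
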